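(* Assume the Bellman setting below and hypotheses (H1)–(H4). For each $i$ let $\mathcal P_i'$ be a nonempty subset of $\mathcal P_i$ and put $\mathcal P'=\mathcal P_0'\times\cdots\times\mathcal P_M'$. Suppose $A(P)$ is nonsingular for every $P\in\mathcal P'$, and that for every $U\in\mathbb R^{M+1}$, $H(U;\mathcal P)\le0$ whenever $H(U;\mathcal P')=0$, where $H(U;\mathcal Q)=\sup_{P\in\mathcal Q}\{-A(P)U+y(P)\}$. Then every sequence $(U^\ell)_\ell$ produced by $\epsilon$-policy iteration on $\mathcal P'$ converges to the unique solution of the Bellman problem $H(U;\mathcal P)=0$.
   Context: Bellman setting: Let $M\ge 0$ be an integer and $\mathcal P=\mathcal P_0\times\cdots\times\mathcal P_M$ a product of nonempty sets; write $P=(P_0,\dots,P_M)\in\mathcal P$. Let $A:\mathcal P\to\mathbb R^{(M+1)\times(M+1)}$ and $y:\mathcal P\to\mathbb R^{M+1}$ be row-decoupled: for each $i$, the $i$-th row of $A(P)$ and the $i$-th entry of $y(P)$ depend only on $P_i$. Inequalities between vectors are entrywise and suprema of families of vectors are entrywise. $\vec e=(1,\dots,1)^\top$. Row $i$ of a matrix $(a_{ij})$ is strictly diagonally dominant (s.d.d.) if $|a_{ii}|>\sum_{j\ne i}|a_{ij}|$, weakly diagonally dominant (w.d.d.) if $|a_{ii}|\ge\sum_{j\ne i}|a_{ij}|$; a matrix is w.d.d. if all rows are. A Z-matrix is a real matrix with nonpositive off-diagonal entries. (H1): $P\mapsto A(P)^{-1}$ is bounded on $\{P: A(P)\text{ nonsingular}\}$.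 (H2): $A$ and $y$ are bounded. (H3): for each $P$, $A(P)$ is a w.d.d. Z-matrix with nonnegative diagonal entries, and $[A(P)]_{ii}\le1$ whenever row $i$ of $A(P)$ is not s.d.d. Define $[\hat y(P)]_i=[y(P)]_i$ if row $i$ of $A(P)$ is not s.d.d. and $-\infty$ otherwise, and $[\mathbb M X]_i=\sup_{P\in\mathcal P}\{(1-[A(P)]_{ii})X_i-\sum_{j\ne i}[A(P)]_{ij}X_j+[\hat y(P)]_i\}$ for vectors with entries in $[-\infty,\infty)$, with conventions $0\cdot(-\infty)=0$ and any sum containing $-\infty$ equals $-\infty$; $\mathbb M^0=I$, $\mathbb M^k=\mathbb M\circ\mathbb M^{k-1}$. (H4): for each $U\in\mathbb R^{M+1}$ and each $i$ there exist integers $0\le m_1<m_2$ with $[\mathbb M^{m_1}U]_i>[\mathbb M^{m_2}U]_i$. $\epsilon$-policy iteration on $\mathcal Q=\mathcal Q_0\times\cdots\times\mathcal Q_M$: pick any $U^0$ and positive $(\epsilon^\ell)_{\ell\ge1}$ with $\sum\epsilon^\ell<\infty$; for $\ell\ge1$ pick $P^\ell\in\mathcal Q$ with $-A(P^\ell)U^{\ell-1}+y(P^\ell)+\epsilon^\ell\vec e\ge\sup_{P\in\mathcal Q}\{-A(P)U^{\ell-1}+y(P)\}$ and let $U^\ell$ solve $A(P^\ell)U^\ell=y(P^\ell)$. *)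

theory Defs
  imports "HOL-Analysis.Analysis"
begin

text \<open>Vectors in R^(M+1) are rendered as real^'i for a finite index type 'i
  (so M+1 = CARD('i)); matrices as real^'i^'i.  A policy P = (P_0,...,P_M) is a
  function 'i => 'p, and the product set P_0 x ... x P_M is Pi UNIV PP.\<close>

definition sdd_row :: "real^'i^'i \<Rightarrow> 'i::finite \<Rightarrow> bool" where
  "sdd_row B i \<longleftrightarrow> \<bar>B $ i $ i\<bar> > (\<Sum>j\<in>UNIV - {i}. \<bar>B $ i $ j\<bar>)"

definition wdd_row :: "real^'i^'i \<Rightarrow> 'i::finite \<Rightarrow> bool" where
  "wdd_row B i \<longleftrightarrow> \<bar>B $ i $ i\<bar> \<ge> (\<Sum>j\<in>UNIV - {i}. \<bar>B $ i $ j\<bar>)"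

definition wdd :: "real^'i^'i \<Rightarrow> bool" where
  "wdd B \<longleftrightarrow> (\<forall>i::'i::finite. wdd_row B i)"

definition Z_matrix :: "real^'i^'i \<Rightarrow> bool" where
  "Z_matrix B \<longleftrightarrow> (\<forall>i j::'i::finite. i \<noteq> j \<longrightarrow> B $ i $ j \<le> 0)"

definition row_decoupled ::
  "('i::finite \<Rightarrow> 'p set) \<Rightarrow> (('i \<Rightarrow> 'p) \<Rightarrow> real^'i^'i) \<Rightarrow> (('i \<Rightarrow> 'p) \<Rightarrow> real^'i) \<Rightarrow> bool" where
  "row_decoupled PP A y \<longleftrightarrow>
     (\<forall>P\<in>Pi UNIV PP. \<forall>Q\<in>Pi UNIV PP. \<forall>i. P i = Q i \<longrightarrow> A P $ i = A Q $ i \<and> y P $ i = y Q $ i)"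

definition Hop ::
  "(('i::finite \<Rightarrow> 'p) \<Rightarrow> real^'i^'i) \<Rightarrow> (('i \<Rightarrow> 'p) \<Rightarrow> real^'i) \<Rightarrow> ('i \<Rightarrow> 'p) set \<Rightarrow> real^'i \<Rightarrow> real^'i" where
  "Hop A y Q U = (\<chi> i. SUP P\<in>Q. (- (A P *v U) + y P) $ i)"

text \<open>The operator M on vectors with entries in [-inf,inf) (ereal-valued).
  If row i of A(P) is s.d.d. then yhat_i = -inf and the whole term is -inf
  (convention: any sum containing -inf is -inf).  Otherwise the term is
  (1 - a_ii) X_i - sum_{j<>i} a_ij X_j + y_i, with ereal arithmetic
  (where 0 * (-inf) = 0).\<close>
definition Mterm :: "real^'i^'i \<Rightarrow> real^'i \<Rightarrow> ('i::finite \<Rightarrow> ereal) \<Rightarrow> 'i \<Rightarrow> ereal" where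
  "Mterm B v X i =
     (if sdd_row B i then -\<infinity>
      else ereal (1 - B $ i $ i) * X i + (\<Sum>j\<in>UNIV - {i}. ereal (- B $ i $ j) * X j) + ereal (v $ i))"

definition Mop ::
  "('i::finite \<Rightarrow> 'p set) \<Rightarrow> (('i \<Rightarrow> 'p) \<Rightarrow> real^'i^'i) \<Rightarrow> (('i \<Rightarrow> 'p) \<Rightarrow> real^'i)
    \<Rightarrow> ('i \<Rightarrow> ereal) \<Rightarrow> ('i \<Rightarrow> ereal)" where
  "Mop PP A y X = (\<lambda>i. SUP P\<in>Pi UNIV PP. Mterm (A P) (y P) X i)"

definition ones :: "real^'i::finite" where
  "ones = (\<chi> i. 1)"

end

theory Submission
  imports Defs
begin

definition good :: "real^'i^'i \<Rightarrow> bool" where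
  "good B \<longleftrightarrow> wdd B \<and> Z_matrix B \<and> (\<forall>i::'i::finite. B$i$i \<ge> 0)"

definition closedset :: "real^'i^'i \<Rightarrow> 'i::finite set \<Rightarrow> bool" where
  "closedset B T \<longleftrightarrow> T \<noteq> {} \<and> (\<forall>i\<in>T. \<not> sdd_row B i \<and> (\<forall>j. j \<notin> T \<longrightarrow> B$i$j = 0))"

lemma rowsum_split: "(\<Sum>j\<in>UNIV. (B::real^'i::finite^'i)$i$j) = B$i$i + (\<Sum>j\<in>UNIV-{i}. B$i$j)"
  by (simp add: sum.remove)

lemma good_rs:
  assumes "good B"
  shows "sdd_row B i \<longleftrightarrow> (\<Sum>j\<in>UNIV. B$i$j) > 0" and "(\<Sum>j\<in>UNIV. B$i$j) \<ge> 0"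
proof -
  have d: "\<bar>B$i$i\<bar> = B$i$i" using assms by (simp add: good_def)
  have o: "(\<Sum>j\<in>UNIV-{i}. \<bar>B$i$j\<bar>) = - (\<Sum>j\<in>UNIV-{i}. B$i$j)"
    using assms by (auto simp: good_def Z_matrix_def sum_negf[symmetric] intro!: sum.cong)
  show "sdd_row B i \<longleftrightarrow> (\<Sum>j\<in>UNIV. B$i$j) > 0"
    unfolding sdd_row_def d o rowsum_split by linarith
  have "wdd_row B i" using assms by (simp add: good_def wdd_def)
  then show "(\<Sum>j\<in>UNIV. B$i$j) \<ge> 0"
    unfolding wdd_row_def d o rowsum_split by linarith
qed

lemma mv_nth: "(B *v x) $ i = (\<Sum>j\<in>UNIV. B$i$j * x$j)"
  by (simp add: matrix_vector_mult_def)

lemma good_mono: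
  fixes B :: "real^'i::finite^'i"
  assumes g: "good B" and nc: "\<And>T. \<not> closedset B T" and ge: "\<And>i. (B *v x)$i \<ge> 0"
  shows "x$i \<ge> 0"
proof (rule ccontr)
  assume "\<not> x$i \<ge> 0"
  define m where "m = Min (range (\<lambda>k. x$k))"
  have mle: "m \<le> x$k" for k unfolding m_def by simp
  have mneg: "m < 0" using mle[of i] \<open>\<not> x$i \<ge> 0\<close> by simp
  have "m \<in> range (\<lambda>k. x$k)" unfolding m_def by (rule Min_in) auto
  then obtain k0 where k0: "x$k0 = m" by auto
  define T where "T = {k. x$k = m}"
  have "closedset B T"
    unfolding closedset_def
  proof (intro conjI ballI allI impI)
    show "T \<noteq> {}" using k0 T_def by auto
    fix k assume kT: "k \<in> T"
    have xk: "x$k = m" using kT T_def by simp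
    have eq: "(B *v x)$k = (\<Sum>j\<in>UNIV. B$k$j) * m + (\<Sum>j\<in>UNIV. B$k$j * (x$j - m))"
      unfolding mv_nth by (simp add: right_diff_distrib sum_subtractf sum_distrib_right)
    have t1: "(\<Sum>j\<in>UNIV. B$k$j) * m \<le> 0"
      using good_rs(2)[OF g, of k] mneg by (simp add: mult_nonneg_nonpos)
    have tj: "B$k$j * (x$j - m) \<le> 0" for j
    proof (cases "j = k")
      case True then show ?thesis using xk by simp
    next
      case False
      then have "B$k$j \<le> 0" using g by (simp add: good_def Z_matrix_def)
      then show ?thesis using mle[of j] by (simp add: mult_nonpos_nonneg)
    qed
    have t2: "(\<Sum>j\<in>UNIV. B$k$j * (x$j - m)) \<le> 0" using tj by (simp add: sum_nonpos)
    have z1: "(\<Sum>j\<in>UNIV. B$k$j) * m = 0" and z2: "(\<Sum>j\<in>UNIV. B$k$j * (x$j - m)) = 0"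
      using ge[of k] eq t1 t2 by linarith+
    from z1 mneg have "(\<Sum>j\<in>UNIV. B$k$j) = 0" by simp
    then show "\<not> sdd_row B k" using good_rs(1)[OF g, of k] by simp
    fix j assume "j \<notin> T"
    then have xj: "x$j > m" using mle[of j] T_def by force
    have "(\<Sum>j\<in>UNIV. - (B$k$j * (x$j - m))) = 0" using z2 by (simp add: sum_negf)
    then have "\<forall>j\<in>UNIV. - (B$k$j * (x$j - m)) = 0"
      using tj by (subst sum_nonneg_eq_0_iff[symmetric]) auto
    then have "B$k$j * (x$j - m) = 0" by auto
    then show "B$k$j = 0" using xj by simp
  qed
  then show False using nc by blast
qed

lemma good_noclosed_invertible:
  fixes B :: "real^'i::finite^'i"
  assumes g: "good B" and nc: "\<And>T. \<not> closedset B T"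
  shows "invertible B"
proof -
  have "x = 0" if "B *v x = 0" for x
  proof -
    have "x$i \<ge> 0" for i using good_mono[OF g nc, of x] that by simp
    moreover have "B *v (-x) = 0" using that by (simp add: vec_eq_iff mv_nth sum_negf)
    then have "(-x)$i \<ge> 0" for i using good_mono[OF g nc, of "-x"] by simp
    ultimately show ?thesis by (simp add: vec_eq_iff) (meson antisym neg_le_0_iff_le)
  qed
  then show ?thesis unfolding invertible_left_inverse matrix_left_invertible_ker by blast
qed

lemma matrix_inv_props:
  fixes B :: "real^'i::finite^'i"
  assumes "invertible B"
  shows "B ** matrix_inv B = mat 1" "matrix_inv B ** B = mat 1"
proof -
  have "\<exists>A'. B ** A' = mat 1 \<and> A' ** B = mat 1" using assms by (simp add: invertible_def)
  then have "B ** matrix_inv B = mat 1 \<and> matrix_inv B ** B = mat 1"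
    unfolding matrix_inv_def by (rule someI_ex)
  then show "B ** matrix_inv B = mat 1" "matrix_inv B ** B = mat 1" by auto
qed


lemma good_invertible_noclosed:
  fixes B :: "real^'i::finite^'i"
  assumes g: "good B" and inv: "invertible B" and cl: "closedset B T"
  shows False
proof -
  define C where "C = matrix_inv B"
  have BC: "B ** C = mat 1" using matrix_inv_props[OF inv] C_def by simp
  have Tne: "T \<noteq> {}" and ns: "\<And>i. i \<in> T \<Longrightarrow> \<not> sdd_row B i"
    and z: "\<And>i j. i \<in> T \<Longrightarrow> j \<notin> T \<Longrightarrow> B$i$j = 0"
    using cl by (auto simp: closedset_def)
  define A' :: "real^'i^'i" where "A' = (\<chi> i j. if i \<in> T then B$i$j else (if i = j then 1 else 0))"
  define C' :: "real^'i^'i" where "C' = (\<chi> i j. if i \<in> T \<and> j \<in> T then C$i$j else (if i = j then 1 else 0))"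
  have "A' ** C' = mat 1"
  proof (simp add: vec_eq_iff, intro allI)
    fix i k
    show "(A' ** C') $ i $ k = mat 1 $ i $ k"
    proof (cases "i \<in> T")
      case False
      then show ?thesis
        by (simp add: A'_def C'_def matrix_matrix_mult_def mat_def if_distrib[of "\<lambda>x. x * _"] cong: if_cong)
    next
      case True
      have "(A' ** C') $ i $ k = (\<Sum>j\<in>UNIV. B$i$j * (if k \<in> T then C$j$k else (if j = k then 1 else 0)))"
        unfolding matrix_matrix_mult_def A'_def C'_def
        using True z[OF True] by (auto intro!: sum.cong)
      also have "\<dots> = mat 1 $ i $ k"
      proof (cases "k \<in> T")
        case True
        then show ?thesis using BC by (simp add: vec_eq_iff matrix_matrix_mult_def)
      next
        case False
        then show ?thesis using z[OF \<open>i \<in> T\<close> False] \<open>i \<in> T\<close>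
          by (auto simp: mat_def if_distrib[of "\<lambda>x. _ * x"] cong: if_cong)
      qed
      finally show ?thesis .
    qed
  qed
  then have CA: "C' ** A' = mat 1" using matrix_left_right_inverse by blast
  define v :: "real^'i" where "v = (\<chi> j. if j \<in> T then 1 else 0)"
  have Av: "A' *v v = 0"
  proof (simp add: vec_eq_iff, intro allI)
    fix i
    show "(A' *v v) $ i = 0"
    proof (cases "i \<in> T")
      case False
      then show ?thesis by (simp add: A'_def v_def mv_nth if_distrib[of "\<lambda>x. x * _"] cong: if_cong)
    next
      case True
      have "(A' *v v) $ i = (\<Sum>j\<in>UNIV. B$i$j)"
        unfolding mv_nth A'_def v_def using True z[OF True] by (auto intro!: sum.cong)
      also have "\<dots> = 0" using good_rs[OF g, of i] ns[OF True] by linarith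
      finally show ?thesis .
    qed
  qed
  have "v = (C' ** A') *v v" using CA by simp
  also have "\<dots> = C' *v (A' *v v)" by (simp add: matrix_vector_mul_assoc)
  also have "\<dots> = 0" using Av by simp
  finally have "v = 0" .
  moreover obtain t where "t \<in> T" using Tne by auto
  ultimately show False by (simp add: vec_eq_iff v_def) (metis zero_neq_one)
qed


abbreviation fv where "fv A y P X \<equiv> - (A P *v X) + y P"

lemma mv_bound:
  fixes B :: "real^'i::finite^'i"
  assumes "\<And>j. \<bar>B$i$j\<bar> \<le> c"
  shows "\<bar>(B *v z)$i\<bar> \<le> c * (\<Sum>j\<in>UNIV. \<bar>z$j\<bar>)"
proof -
  have "\<bar>(B *v z)$i\<bar> \<le> (\<Sum>j\<in>UNIV. \<bar>B$i$j * z$j\<bar>)" unfolding mv_nth by (rule sum_abs)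
  also have "\<dots> \<le> (\<Sum>j\<in>UNIV. c * \<bar>z$j\<bar>)"
    by (rule sum_mono) (simp add: abs_mult assms mult_right_mono)
  finally show ?thesis by (simp add: sum_distrib_left)
qed

lemma Hop_nth: "Hop A y Q X $ i = (SUP P\<in>Q. (fv A y P X)$i)"
  by (simp add: Hop_def)

context
  fixes A :: "('i::finite \<Rightarrow> 'p) \<Rightarrow> real^'i^'i" and y :: "('i \<Rightarrow> 'p) \<Rightarrow> real^'i"
    and Q :: "('i \<Rightarrow> 'p) set" and BA By :: real
  assumes bA: "\<And>P i j. P \<in> Q \<Longrightarrow> \<bar>A P$i$j\<bar> \<le> BA"
    and bY: "\<And>P i. P \<in> Q \<Longrightarrow> \<bar>y P$i\<bar> \<le> By"
begin

lemma fv_bdd: "bdd_above ((\<lambda>P. (fv A y P X)$i) ` Q)"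
proof (rule bdd_aboveI2)
  fix P assume "P \<in> Q"
  have "\<bar>(A P *v X)$i\<bar> \<le> BA * (\<Sum>j\<in>UNIV. \<bar>X$j\<bar>)" by (rule mv_bound[OF bA[OF \<open>P\<in>Q\<close>]])
  then show "(fv A y P X)$i \<le> BA * (\<Sum>j\<in>UNIV. \<bar>X$j\<bar>) + By" using bY[OF \<open>P\<in>Q\<close>, of i] by simp
qed

lemma Hup: "P \<in> Q \<Longrightarrow> (fv A y P X)$i \<le> Hop A y Q X $ i"
  unfolding Hop_nth by (rule cSUP_upper[OF _ fv_bdd])

lemma Hupv: "P \<in> Q \<Longrightarrow> fv A y P X \<le> Hop A y Q X"
  unfolding less_eq_vec_def using Hup by blast

lemma Hleast: "Q \<noteq> {} \<Longrightarrow> (\<And>P. P \<in> Q \<Longrightarrow> (fv A y P X)$i \<le> c) \<Longrightarrow> Hop A y Q X $ i \<le> c"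
  unfolding Hop_nth by (rule cSUP_least) auto

lemma Happrox: "Q \<noteq> {} \<Longrightarrow> e > 0 \<Longrightarrow> \<exists>P\<in>Q. (fv A y P X)$i > Hop A y Q X $ i - e"
  unfolding Hop_nth
proof -
  assume "Q \<noteq> {}" "e > 0"
  then have "(SUP P\<in>Q. (fv A y P X)$i) - e < (SUP P\<in>Q. (fv A y P X)$i)" by simp
  then show "\<exists>P\<in>Q. (fv A y P X)$i > (SUP P\<in>Q. (fv A y P X)$i) - e"
    using less_cSUP_iff[OF \<open>Q \<noteq> {}\<close> fv_bdd] by blast
qed

end

lemma decouple:
  fixes A :: "('i::finite \<Rightarrow> 'p) \<Rightarrow> real^'i^'i" and y :: "('i \<Rightarrow> 'p) \<Rightarrow> real^'i"
  assumes dec: "row_decoupled PP A y"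
    and ex: "\<And>i. \<exists>Q\<in>Pi UNIV PP. (fv A y Q X)$i > c i"
  shows "\<exists>P\<in>Pi UNIV PP. \<forall>i. (fv A y P X)$i > c i"
proof -
  have "\<forall>i. \<exists>Q. Q \<in> Pi UNIV PP \<and> (fv A y Q X)$i > c i" using ex by blast
  from choice[OF this] obtain Q where Q0: "\<forall>i. Q i \<in> Pi UNIV PP \<and> (fv A y (Q i) X)$i > c i"
    by blast
  then have Q: "\<And>i. Q i \<in> Pi UNIV PP" "\<And>i. (fv A y (Q i) X)$i > c i" by auto
  define P where "P = (\<lambda>i. Q i i)"
  have P: "P \<in> Pi UNIV PP" using Q(1) by (auto simp: P_def)
  have "(fv A y P X)$i = (fv A y (Q i) X)$i" for i
  proof -
    have "A P $ i = A (Q i) $ i \<and> y P $ i = y (Q i) $ i"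
      using dec P Q(1)[of i] unfolding row_decoupled_def by (metis P_def)
    then show ?thesis by (simp add: mv_nth)
  qed
  then show ?thesis using P Q(2) by (metis (no_types, lifting))
qed


lemma Mterm_alg:
  fixes B :: "real^'i::finite^'i"
  shows "(1 - B$i$i) * W$i + (\<Sum>j\<in>UNIV-{i}. (- B$i$j) * W$j) + v$i = W$i + (-(B *v W) + v)$i"
proof -
  have "(B *v W)$i = B$i$i * W$i + (\<Sum>j\<in>UNIV-{i}. B$i$j * W$j)"
    unfolding mv_nth by (simp add: sum.remove)
  then show ?thesis by (simp add: algebra_simps sum_negf)
qed

lemma Mterm_le:
  fixes B :: "real^'i::finite^'i"
  assumes g: "good B" and d1: "\<not> sdd_row B i \<Longrightarrow> B$i$i \<le> 1" and le: "\<And>j. X j \<le> ereal (W$j)"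
  shows "Mterm B v X i \<le> ereal (W$i + (-(B *v W) + v)$i)"
proof (cases "sdd_row B i")
  case True then show ?thesis by (simp add: Mterm_def)
next
  case False
  have c1: "ereal (1 - B$i$i) * X i \<le> ereal ((1 - B$i$i) * W$i)"
    using ereal_mult_left_mono[OF le[of i], of "ereal (1 - B$i$i)"] d1[OF False] by simp
  have cj: "ereal (- B$i$j) * X j \<le> ereal ((- B$i$j) * W$j)" if "j \<in> UNIV - {i}" for j
  proof -
    have "B$i$j \<le> 0" using g that by (auto simp: good_def Z_matrix_def)
    then show ?thesis using ereal_mult_left_mono[OF le[of j], of "ereal (- B$i$j)"] by simp
  qed
  have "Mterm B v X i \<le> ereal ((1 - B$i$i) * W$i) + (\<Sum>j\<in>UNIV-{i}. ereal ((- B$i$j) * W$j)) + ereal (v$i)"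
    unfolding Mterm_def if_not_P[OF False] by (intro add_mono c1 order_refl sum_mono cj)
  also have "\<dots> = ereal (W$i + (-(B *v W) + v)$i)"
    using Mterm_alg[of B i W v] by simp
  finally show ?thesis .
qed

lemma Mterm_ge:
  fixes B :: "real^'i::finite^'i"
  assumes g: "good B" and ns: "\<not> sdd_row B i" and d1: "B$i$i \<le> 1" and gi: "ereal (W$i) \<le> X i"
    and gj: "\<And>j. j \<noteq> i \<Longrightarrow> B$i$j \<noteq> 0 \<Longrightarrow> ereal (W$j) \<le> X j"
  shows "ereal (W$i + (-(B *v W) + v)$i) \<le> Mterm B v X i"
proof -
  have c1: "ereal ((1 - B$i$i) * W$i) \<le> ereal (1 - B$i$i) * X i"
    using ereal_mult_left_mono[OF gi, of "ereal (1 - B$i$i)"] d1 by simp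
  have cj: "ereal ((- B$i$j) * W$j) \<le> ereal (- B$i$j) * X j" if "j \<in> UNIV - {i}" for j
  proof (cases "B$i$j = 0")
    case True then show ?thesis by (simp add: zero_ereal_def[symmetric])
  next
    case False
    have "B$i$j \<le> 0" using g that by (auto simp: good_def Z_matrix_def)
    then show ?thesis using ereal_mult_left_mono[OF gj, of j "ereal (- B$i$j)"] that False by simp
  qed
  have "ereal (W$i + (-(B *v W) + v)$i) = ereal ((1 - B$i$i) * W$i) + (\<Sum>j\<in>UNIV-{i}. ereal ((- B$i$j) * W$j)) + ereal (v$i)"
    using Mterm_alg[of B i W v] by simp
  also have "\<dots> \<le> Mterm B v X i"
    unfolding Mterm_def if_not_P[OF ns] by (intro add_mono c1 order_refl sum_mono cj)
  finally show ?thesis .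
qed


lemma near_opt_noclosed:
  fixes PP :: "'i::finite \<Rightarrow> 'p set"
    and A :: "('i \<Rightarrow> 'p) \<Rightarrow> real^'i^'i"
    and y :: "('i \<Rightarrow> 'p) \<Rightarrow> real^'i"
  assumes gd: "\<And>P. P \<in> Pi UNIV PP \<Longrightarrow> good (A P) \<and> (\<forall>i. \<not> sdd_row (A P) i \<longrightarrow> A P $ i $ i \<le> 1)"
    and H4: "\<And>(V::real^'i) i. \<exists>m1 m2::nat. m1 < m2 \<and>
               (Mop PP A y ^^ m1) (\<lambda>j. ereal (V $ j)) i > (Mop PP A y ^^ m2) (\<lambda>j. ereal (V $ j)) i"
    and fle: "\<And>P j. P \<in> Pi UNIV PP \<Longrightarrow> (fv A y P W)$j \<le> 0"
  shows "\<exists>e0>0. \<forall>P\<in>Pi UNIV PP. (\<forall>i. (fv A y P W)$i \<ge> - e0) \<longrightarrow> (\<forall>T. \<not> closedset (A P) T)"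
proof (rule ccontr)
  let ?PS = "Pi UNIV PP"
  assume "\<not> ?thesis"
  then have ex: "\<And>e. e > 0 \<Longrightarrow> \<exists>P\<in>?PS. (\<forall>i. (fv A y P W)$i \<ge> - e) \<and> (\<exists>T. closedset (A P) T)"
    by blast
  have "\<forall>n. \<exists>P. P \<in> ?PS \<and> (\<forall>i. (fv A y P W)$i \<ge> - inverse (real (Suc n))) \<and> (\<exists>T. closedset (A P) T)"
  proof
    fix n :: nat
    have "inverse (real (Suc n)) > 0" by simp
    from ex[OF this] show "\<exists>P. P \<in> ?PS \<and> (\<forall>i. (fv A y P W)$i \<ge> - inverse (real (Suc n))) \<and> (\<exists>T. closedset (A P) T)"
      by blast
  qed
  from choice[OF this] obtain Pn where Pn: "\<forall>n. Pn n \<in> ?PS \<and> (\<forall>i. (fv A y (Pn n) W)$i \<ge> - inverse (real (Suc n))) \<and> (\<exists>T. closedset (A (Pn n)) T)"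
    by blast
  then have "\<forall>n. \<exists>T. closedset (A (Pn n)) T" by blast
  from choice[OF this] obtain Tn where Tn: "\<forall>n. closedset (A (Pn n)) (Tn n)" by blast
  have "finite (range Tn)" by (rule finite_subset[of _ UNIV]) auto
  then obtain T0 where "infinite (Tn -` {T0})"
    using inf_img_fin_domE[of Tn UNIV] by auto
  then have unb: "\<forall>m. \<exists>n\<ge>m. Tn n = T0" by (metis infinite_nat_iff_unbounded_le vimage_singleton_eq)
  have KP: "\<exists>P\<in>?PS. (\<forall>i. (fv A y P W)$i \<ge> - e) \<and> closedset (A P) T0" if e_pos: "e > 0" for e
  proof -
    obtain m where m: "inverse (real (Suc m)) < e" using reals_Archimedean[OF e_pos] by auto
    obtain n where n: "n \<ge> m" "Tn n = T0" using unb by blast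
    have "inverse (real (Suc n)) \<le> inverse (real (Suc m))" using n(1) by (simp add: le_imp_inverse_le)
    have "\<forall>i. (fv A y (Pn n) W)$i \<ge> - e"
    proof
      fix i
      have "- inverse (real (Suc n)) \<le> (fv A y (Pn n) W)$i" using Pn by blast
      then show "(fv A y (Pn n) W)$i \<ge> - e" using m \<open>inverse (real (Suc n)) \<le> inverse (real (Suc m))\<close> by linarith
    qed
    then show ?thesis using Pn Tn n(2) by blast
  qed
  define Wv where "Wv = (\<lambda>j. ereal (W $ j))"
  have main: "(\<forall>j. (Mop PP A y ^^ m) Wv j \<le> ereal (W$j)) \<and> (\<forall>j\<in>T0. ereal (W$j) \<le> (Mop PP A y ^^ m) Wv j)" for m
  proof (induction m)
    case 0 then show ?case by (simp add: Wv_def)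
  next
    case (Suc m)
    define X where "X = (Mop PP A y ^^ m) Wv"
    have XS: "(Mop PP A y ^^ Suc m) Wv = Mop PP A y X" by (simp add: X_def)
    have IH1: "\<And>j. X j \<le> ereal (W$j)" and IH2: "\<And>j. j \<in> T0 \<Longrightarrow> ereal (W$j) \<le> X j"
      using Suc.IH by (auto simp: X_def)
    have A1: "Mop PP A y X j \<le> ereal (W$j)" for j
      unfolding Mop_def
    proof (rule SUP_least)
      fix P assume P: "P \<in> ?PS"
      have "Mterm (A P) (y P) X j \<le> ereal (W$j + (fv A y P W)$j)"
        using Mterm_le[of "A P" j X W "y P"] gd[OF P] IH1 by blast
      also have "\<dots> \<le> ereal (W$j)" using fle[OF P, of j] by simp
      finally show "Mterm (A P) (y P) X j \<le> ereal (W$j)" .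
    qed
    have A2: "ereal (W$j) \<le> Mop PP A y X j" if jT: "j \<in> T0" for j
    proof (rule ereal_le_epsilon2)
      fix e :: real assume "e > 0"
      then obtain P where P: "P \<in> ?PS" "\<forall>i. (fv A y P W)$i \<ge> - e" "closedset (A P) T0"
        using KP by blast
      have ns: "\<not> sdd_row (A P) j" and cz: "\<And>k. k \<notin> T0 \<Longrightarrow> A P $ j $ k = 0"
        using P(3) jT by (auto simp: closedset_def)
      have "ereal (W$j + (fv A y P W)$j) \<le> Mterm (A P) (y P) X j"
      proof (rule Mterm_ge)
        show "good (A P)" using gd[OF P(1)] by blast
        show "A P $ j $ j \<le> 1" using gd[OF P(1)] ns by blast
        show "ereal (W$j) \<le> X j" using IH2[OF jT] .
        fix k assume "k \<noteq> j" "A P $ j $ k \<noteq> 0"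
        then have "k \<in> T0" using cz by blast
        then show "ereal (W$k) \<le> X k" using IH2 by blast
      qed (rule ns)
      also have "\<dots> \<le> Mop PP A y X j" unfolding Mop_def by (rule SUP_upper[OF P(1)])
      finally have m1: "ereal (W$j + (fv A y P W)$j) \<le> Mop PP A y X j" .
      have "W$j - e \<le> W$j + (fv A y P W)$j" using P(2)[rule_format, of j] by linarith
      then have "ereal (W$j - e) \<le> ereal (W$j + (fv A y P W)$j)" by (simp only: ereal_less_eq(3))
      then have "ereal (W$j - e) \<le> Mop PP A y X j" using m1 by (rule order.trans)
      then have "ereal (W$j - e) + ereal e \<le> Mop PP A y X j + ereal e" by (rule add_right_mono)
      then show "ereal (W$j) \<le> Mop PP A y X j + ereal e" by simp
    qed
    show ?case using A1 A2 XS by simp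
  qed
  obtain n0 where "Tn n0 = T0" using unb by blast
  then have "T0 \<noteq> {}" using Tn by (auto simp: closedset_def)
  then obtain t where t: "t \<in> T0" by auto
  obtain m1 m2 where "m1 < m2" "(Mop PP A y ^^ m1) Wv t > (Mop PP A y ^^ m2) Wv t"
    using H4[of W t] unfolding Wv_def by blast
  moreover have "(Mop PP A y ^^ m) Wv t = ereal (W$t)" for m using main[of m] t by (meson antisym)
  ultimately show False by simp
qed


lemma inv_ones:
  fixes B :: "real^'i::finite^'i"
  assumes "invertible B" and K: "\<And>i j. \<bar>matrix_inv B $ i $ j\<bar> \<le> K"
  shows "B *v (matrix_inv B *v ones) = ones" and "(matrix_inv B *v ones) $ i \<le> K * real CARD('i)"
proof -
  show "B *v (matrix_inv B *v ones) = ones"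
    using matrix_inv_props(1)[OF assms(1)] by (simp add: matrix_vector_mul_assoc)
  have "\<bar>(matrix_inv B *v ones) $ i\<bar> \<le> K * (\<Sum>j\<in>UNIV. \<bar>(ones::real^'i)$j\<bar>)"
    by (rule mv_bound) (rule K)
  then show "(matrix_inv B *v ones) $ i \<le> K * real CARD('i)" by (simp add: ones_def)
qed

lemma aux_frac: "0 \<le> (x::real) \<Longrightarrow> 0 < t \<Longrightarrow> t / (x + 1) * x \<le> t"
proof -
  assume x: "0 \<le> x" and t: "0 < t"
  have "t * x \<le> t * (x + 1)" using t by simp
  then have "t * x / (x + 1) \<le> t" using x by (simp add: pos_divide_le_eq)
  then show ?thesis by simp
qed

lemma uniq_le:
  fixes PP :: "'i::finite \<Rightarrow> 'p set"
    and A :: "('i \<Rightarrow> 'p) \<Rightarrow> real^'i^'i"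
    and y :: "('i \<Rightarrow> 'p) \<Rightarrow> real^'i"
  assumes dec: "row_decoupled PP A y"
    and ne: "Pi UNIV PP \<noteq> {}"
    and bA: "\<And>P i j. P \<in> Pi UNIV PP \<Longrightarrow> \<bar>A P$i$j\<bar> \<le> BA"
    and bY: "\<And>P i. P \<in> Pi UNIV PP \<Longrightarrow> \<bar>y P$i\<bar> \<le> By"
    and gd: "\<And>P. P \<in> Pi UNIV PP \<Longrightarrow> good (A P) \<and> (\<forall>i. \<not> sdd_row (A P) i \<longrightarrow> A P $ i $ i \<le> 1)"
    and H4: "\<And>(V::real^'i) i. \<exists>m1 m2::nat. m1 < m2 \<and>
               (Mop PP A y ^^ m1) (\<lambda>j. ereal (V $ j)) i > (Mop PP A y ^^ m2) (\<lambda>j. ereal (V $ j)) i"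
    and K: "\<And>P i j. P \<in> Pi UNIV PP \<Longrightarrow> invertible (A P) \<Longrightarrow> \<bar>matrix_inv (A P) $ i $ j\<bar> \<le> K"
    and HW: "Hop A y (Pi UNIV PP) W = 0"
    and HU: "Hop A y (Pi UNIV PP) Us \<le> 0"
  shows "W $ k \<le> Us $ k"
proof -
  let ?PS = "Pi UNIV PP"
  have fle: "(fv A y P W)$j \<le> 0" if "P \<in> ?PS" for P j
    using Hup[where A=A and y=y and Q="Pi UNIV PP" and BA=BA and By=By, OF bA bY that, where X=W and i=j] HW by simp
  have fleU: "(fv A y P Us)$j \<le> 0" if "P \<in> ?PS" for P j
    using Hup[where A=A and y=y and Q="Pi UNIV PP" and BA=BA and By=By, OF bA bY that, where X=Us and i=j] HU unfolding less_eq_vec_def by (metis diff_le_0_iff_le order.trans zero_index)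
  obtain e0 where e0: "e0 > 0" "\<And>P. P\<in>?PS \<Longrightarrow> (\<forall>i. (fv A y P W)$i \<ge> - e0) \<Longrightarrow> (\<forall>T. \<not> closedset (A P) T)"
    using near_opt_noclosed[OF gd H4 fle] by blast
  let ?CK = "max K 0 * real CARD('i)"
  have CK: "?CK \<ge> 0" by simp
  have step: "W $ k - Us $ k \<le> e * ?CK" if e: "e > 0" "e \<le> e0" for e
  proof -
    have "\<exists>Q\<in>?PS. (fv A y Q W)$i > - e" for i
      using Happrox[where A=A and y=y and Q="Pi UNIV PP" and BA=BA and By=By, OF bA bY ne e(1), where X=W and i=i] HW by simp
    then obtain P where P: "P \<in> ?PS" "\<And>i. (fv A y P W)$i > - e"
      using decouple[OF dec, where X=W and c="\<lambda>_. - e"] by blast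
    have "\<forall>i. (fv A y P W)$i \<ge> - e0"
    proof
      fix i show "(fv A y P W)$i \<ge> - e0" using P(2)[of i] e(2) by linarith
    qed
    then have nc: "\<And>T. \<not> closedset (A P) T" using e0(2)[OF P(1)] by blast
    have g: "good (A P)" using gd[OF P(1)] by blast
    have inv: "invertible (A P)" by (rule good_noclosed_invertible[OF g nc])
    have Kp: "\<bar>matrix_inv (A P) $ i $ j\<bar> \<le> max K 0" for i j using K[OF P(1) inv, of i j] by simp
    define w where "w = matrix_inv (A P) *v ones"
    have Aw: "A P *v w = ones" unfolding w_def by (rule inv_ones(1)[OF inv Kp])
    have wb: "w $ i \<le> ?CK" for i unfolding w_def by (rule inv_ones(2)[OF inv Kp])
    define d where "d = e *\<^sub>R w - (W - Us)"
    have "(A P *v d) $ i \<ge> 0" for i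
    proof -
      have "(A P *v d) $ i = e - (A P *v W)$i + (A P *v Us)$i"
        unfolding d_def using Aw by (simp add: algebra_simps ones_def)
      moreover have "(fv A y P W)$i > - e" by (rule P(2))
      moreover have "(fv A y P Us)$i \<le> 0" by (rule fleU[OF P(1)])
      ultimately show ?thesis by simp
    qed
    then have "d $ k \<ge> 0" by (rule good_mono[OF g nc])
    then have "W $ k - Us $ k \<le> e * w $ k" by (simp add: d_def)
    also have "\<dots> \<le> e * ?CK" using wb[of k] e(1) by (simp add: mult_left_mono)
    finally show ?thesis .
  qed
  have "W $ k - Us $ k \<le> 0 + t" if t: "t > 0" for t
  proof -
    define e where "e = min e0 (t / (?CK + 1))"
    have "?CK + 1 > 0" using CK by linarith
    then have "t / (?CK + 1) > 0" using t by (intro divide_pos_pos)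
    then have ep: "e > 0" "e \<le> e0" using e0(1) by (auto simp: e_def)
    have "e \<le> t / (?CK + 1)" by (simp add: e_def)
    then have "e * ?CK \<le> t / (?CK + 1) * ?CK" using CK by (rule mult_right_mono)
    also have "\<dots> \<le> t" using CK t by (rule aux_frac)
    finally show ?thesis using step[OF ep] by simp
  qed
  then have "W $ k - Us $ k \<le> 0" by (rule field_le_epsilon)
  then show ?thesis by simp
qed


theorem theorem3p10:
  fixes PP PP' :: "'i::finite \<Rightarrow> 'p set"
    and A :: "('i \<Rightarrow> 'p) \<Rightarrow> real^'i^'i"
    and y :: "('i \<Rightarrow> 'p) \<Rightarrow> real^'i"
    and U :: "nat \<Rightarrow> real^'i"
    and Pol :: "nat \<Rightarrow> ('i \<Rightarrow> 'p)"
    and eps :: "nat \<Rightarrow> real"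
  assumes nonempty: "\<And>i. PP i \<noteq> {}"
    and decoupled: "row_decoupled PP A y"
    and H1: "bounded ((\<lambda>P. matrix_inv (A P)) ` {P \<in> Pi UNIV PP. invertible (A P)})"
    and H2A: "bounded (A ` Pi UNIV PP)"
    and H2y: "bounded (y ` Pi UNIV PP)"
    and H3: "\<And>P. P \<in> Pi UNIV PP \<Longrightarrow>
               wdd (A P) \<and> Z_matrix (A P) \<and> (\<forall>i. A P $ i $ i \<ge> 0)
               \<and> (\<forall>i. \<not> sdd_row (A P) i \<longrightarrow> A P $ i $ i \<le> 1)"
    and H4: "\<And>(V::real^'i) i. \<exists>m1 m2::nat. m1 < m2 \<and>
               (Mop PP A y ^^ m1) (\<lambda>j. ereal (V $ j)) i > (Mop PP A y ^^ m2) (\<lambda>j. ereal (V $ j)) i"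
    and sub: "\<And>i. PP' i \<subseteq> PP i" "\<And>i. PP' i \<noteq> {}"
    and nonsing: "\<And>P. P \<in> Pi UNIV PP' \<Longrightarrow> invertible (A P)"
    and compat: "\<And>V. Hop A y (Pi UNIV PP') V = 0 \<Longrightarrow> Hop A y (Pi UNIV PP) V \<le> 0"
    and eps_pos: "\<And>l. l \<ge> 1 \<Longrightarrow> eps l > 0"
    and eps_sum: "summable (\<lambda>l. eps (Suc l))"
    and pol_in: "\<And>l. l \<ge> 1 \<Longrightarrow> Pol l \<in> Pi UNIV PP'"
    and pol_eps: "\<And>l. l \<ge> 1 \<Longrightarrow>
        - (A (Pol l) *v U (l - 1)) + y (Pol l) + eps l *\<^sub>R ones \<ge> Hop A y (Pi UNIV PP') (U (l - 1))"
    and solve: "\<And>l. l \<ge> 1 \<Longrightarrow> A (Pol l) *v U l = y (Pol l)"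
  shows "\<exists>V. Hop A y (Pi UNIV PP) V = 0 \<and> (\<forall>W. Hop A y (Pi UNIV PP) W = 0 \<longrightarrow> W = V)
             \<and> U \<longlonglongrightarrow> V"
proof -
  let ?PS = "Pi UNIV PP" and ?PS' = "Pi UNIV PP'"
  have subPS: "?PS' \<subseteq> ?PS" using sub(1) by auto
  have neP: "?PS' \<noteq> {}"
  proof -
    have "(\<lambda>i. SOME p. p \<in> PP' i) \<in> ?PS'" using sub(2) by (auto intro: some_in_eq[THEN iffD2])
    then show ?thesis by blast
  qed
  then have neS: "?PS \<noteq> {}" using subPS by blast
  obtain BA0 where BA0: "\<And>P. P \<in> ?PS \<Longrightarrow> norm (A P) \<le> BA0"
    using H2A unfolding bounded_iff by blast
  have bA: "\<bar>A P$i$j\<bar> \<le> BA0" if "P \<in> ?PS" for P i j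
    using component_le_norm_cart[where x="A P $ i" and i=j] Finite_Cartesian_Product.norm_nth_le[where x="A P" and i=i] BA0[OF that] by linarith
  obtain By where By: "\<And>P. P \<in> ?PS \<Longrightarrow> norm (y P) \<le> By"
    using H2y unfolding bounded_iff by blast
  have bY: "\<bar>y P$i\<bar> \<le> By" if "P \<in> ?PS" for P i
    using component_le_norm_cart[where x="y P" and i=i] By[OF that] by linarith
  obtain K0 where K0: "\<And>P. P \<in> ?PS \<Longrightarrow> invertible (A P) \<Longrightarrow> norm (matrix_inv (A P)) \<le> K0"
    using H1 unfolding bounded_iff by blast
  define K where "K = max K0 0"
  have K: "\<bar>matrix_inv (A P) $ i $ j\<bar> \<le> K" if "P \<in> ?PS" "invertible (A P)" for P i j
    using component_le_norm_cart[where x="matrix_inv (A P) $ i" and i=j] Finite_Cartesian_Product.norm_nth_le[where x="matrix_inv (A P)" and i=i]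
      K0[OF that] unfolding K_def by linarith
  have K0le: "K \<ge> 0" by (simp add: K_def)
  have bA': "\<bar>A P$i$j\<bar> \<le> BA0" if "P \<in> ?PS'" for P i j using bA subPS that by blast
  have bY': "\<bar>y P$i\<bar> \<le> By" if "P \<in> ?PS'" for P i using bY subPS that by blast
  have gd: "good (A P) \<and> (\<forall>i. \<not> sdd_row (A P) i \<longrightarrow> A P $ i $ i \<le> 1)" if "P \<in> ?PS" for P
    using H3[OF that] by (simp add: good_def)
  have mono': "x $ i \<ge> 0" if P: "P \<in> ?PS'" and ge: "\<And>i. (A P *v x)$i \<ge> 0" for P x i
  proof -
    have g: "good (A P)" using gd subPS P by blast
    have "\<And>T. \<not> closedset (A P) T" using good_invertible_noclosed[OF g nonsing[OF P]] by blast
    then show ?thesis using good_mono[OF g _ ge] by blast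
  qed
  define CK where "CK = K * real CARD('i)"
  have CK0: "CK \<ge> 0" using K0le by (simp add: CK_def)
  have invP: "invertible (A (Pol l))" if "l \<ge> 1" for l using nonsing[OF pol_in[OF that]] .
  have PolS: "Pol l \<in> ?PS" if "l \<ge> 1" for l using pol_in[OF that] subPS by blast
  define BU where "BU = K * (real CARD('i) * By)"
  have Ubd: "\<bar>U l $ i\<bar> \<le> BU" if "l \<ge> 1" for l i
  proof -
    have "U l = matrix_inv (A (Pol l)) *v (A (Pol l) *v U l)"
      using matrix_inv_props(2)[OF invP[OF that]] by (simp add: matrix_vector_mul_assoc)
    also have "\<dots> = matrix_inv (A (Pol l)) *v y (Pol l)" using solve[OF that] by simp
    finally have e: "U l = matrix_inv (A (Pol l)) *v y (Pol l)" .
    have "\<bar>U l $ i\<bar> \<le> K * (\<Sum>j\<in>UNIV. \<bar>y (Pol l) $ j\<bar>)"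
      unfolding e by (rule mv_bound) (rule K[OF PolS[OF that] invP[OF that]])
    also have "\<dots> \<le> K * (\<Sum>j\<in>(UNIV::'i set). By)"
      using bY[OF PolS[OF that]] K0le by (intro mult_left_mono sum_mono) auto
    finally show ?thesis by (simp add: BU_def)
  qed
  have Umono: "U (Suc l) $ i \<ge> U l $ i - eps (Suc l) * CK" if l1: "l \<ge> 1" for l i
  proof -
    let ?B = "A (Pol (Suc l))"
    have s1: "Suc l \<ge> 1" by simp
    define w where "w = matrix_inv ?B *v ones"
    have Kp: "\<And>i j. \<bar>matrix_inv ?B $ i $ j\<bar> \<le> K" using K[OF PolS[OF s1] invP[OF s1]] .
    have Bw: "?B *v w = ones" unfolding w_def by (rule inv_ones(1)[OF invP[OF s1] Kp])
    have wb: "w $ k \<le> CK" for k unfolding w_def CK_def by (rule inv_ones(2)[OF invP[OF s1] Kp])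
    define d where "d = U (Suc l) - U l + eps (Suc l) *\<^sub>R w"
    have "(?B *v d) $ k \<ge> 0" for k
    proof -
      have "(?B *v d) $ k = y (Pol (Suc l)) $ k - (?B *v U l) $ k + eps (Suc l)"
        unfolding d_def using Bw solve[OF s1] by (simp add: algebra_simps ones_def)
      moreover have "Hop A y ?PS' (U l) $ k \<le> (- (?B *v U l) + y (Pol (Suc l)) + eps (Suc l) *\<^sub>R ones) $ k"
        using pol_eps[OF s1] by (simp add: less_eq_vec_def del: vector_uminus_component vector_add_component vector_scaleR_component)
      moreover have "(fv A y (Pol l) (U l)) $ k \<le> Hop A y ?PS' (U l) $ k"
        by (rule Hup[where A=A and y=y and Q="?PS'" and BA=BA0 and By=By, OF bA' bY' pol_in[OF l1]])
      moreover have "fv A y (Pol l) (U l) = 0" using solve[OF l1] by simp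
      ultimately show ?thesis by (simp add: ones_def)
    qed
    then have "d $ i \<ge> 0" by (rule mono'[OF pol_in[OF s1]])
    then have "U (Suc l) $ i \<ge> U l $ i - eps (Suc l) * w $ i" by (simp add: d_def)
    moreover have "eps (Suc l) * w $ i \<le> eps (Suc l) * CK"
      using eps_pos[OF s1] wb[of i] by (simp add: mult_left_mono)
    ultimately show ?thesis by linarith
  qed
  have summ2: "summable (\<lambda>k. eps (Suc (Suc k)))" using summable_Suc_iff[of "\<lambda>k. eps (Suc k)"] eps_sum by simp
  have conv: "\<exists>L. (\<lambda>l. U l $ i) \<longlonglongrightarrow> L" for i
  proof -
    define S where "S l = (\<Sum>k<l. eps (Suc (Suc k)))" for l
    define G where "G l = U (Suc l) $ i + CK * S l" for l
    have "incseq G"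
    proof (rule incseq_SucI)
      fix l
      have "U (Suc (Suc l)) $ i \<ge> U (Suc l) $ i - eps (Suc (Suc l)) * CK" by (rule Umono) simp
      then show "G l \<le> G (Suc l)" by (simp add: G_def S_def algebra_simps)
    qed
    moreover have "G l \<le> BU + CK * suminf (\<lambda>k. eps (Suc k))" for l
    proof -
      have "S l \<le> (\<Sum>k<Suc l. eps (Suc k))"
        unfolding S_def sum.lessThan_Suc_shift using eps_pos[of 1] by simp
      also have "\<dots> \<le> suminf (\<lambda>k. eps (Suc k))"
        using eps_sum by (rule sum_le_suminf) (simp_all add: less_imp_le eps_pos)
      finally have "CK * S l \<le> CK * suminf (\<lambda>k. eps (Suc k))" using CK0 by (rule mult_left_mono)
      moreover have "U (Suc l) $ i \<le> BU" using Ubd[of "Suc l" i] by simp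
      ultimately show ?thesis by (simp add: G_def)
    qed
    ultimately obtain LG where LG: "G \<longlonglongrightarrow> LG" using incseq_convergent by blast
    have "S \<longlonglongrightarrow> suminf (\<lambda>k. eps (Suc (Suc k)))" unfolding S_def by (rule summable_LIMSEQ[OF summ2])
    then have "(\<lambda>l. G l - CK * S l) \<longlonglongrightarrow> LG - CK * suminf (\<lambda>k. eps (Suc (Suc k)))"
      by (intro tendsto_intros LG)
    then have "(\<lambda>l. U (Suc l) $ i) \<longlonglongrightarrow> LG - CK * suminf (\<lambda>k. eps (Suc (Suc k)))"
      by (simp add: G_def)
    then have "(\<lambda>l. U l $ i) \<longlonglongrightarrow> LG - CK * suminf (\<lambda>k. eps (Suc (Suc k)))"
      by (rule LIMSEQ_imp_Suc[where f="\<lambda>l. U l $ i"])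
    then show ?thesis by blast
  qed
  then have "\<forall>i. \<exists>L. (\<lambda>l. U l $ i) \<longlonglongrightarrow> L" by blast
  from choice[OF this] obtain L where L: "\<And>i. (\<lambda>l. U l $ i) \<longlonglongrightarrow> L i" by blast
  define Us where "Us = (\<chi> i. L i)"
  have Uc: "(\<lambda>l. U l $ i) \<longlonglongrightarrow> Us $ i" for i using L by (simp add: Us_def)
  have Ulim: "U \<longlonglongrightarrow> Us" by (rule vec_tendstoI) (rule Uc)
  define r where "r l = (\<Sum>j\<in>UNIV. \<bar>U l $ j - Us $ j\<bar>)" for l
  have r0: "r \<longlonglongrightarrow> 0"
  proof -
    have "(\<lambda>l. \<bar>U l $ j - Us $ j\<bar>) \<longlonglongrightarrow> \<bar>Us $ j - Us $ j\<bar>" for j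
      by (intro tendsto_intros Uc)
    then have "(\<lambda>l. \<Sum>j\<in>UNIV. \<bar>U l $ j - Us $ j\<bar>) \<longlonglongrightarrow> (\<Sum>j\<in>UNIV. \<bar>Us $ j - Us $ j\<bar>)"
      by (intro tendsto_sum)
    then show ?thesis unfolding r_def[abs_def] by simp
  qed
  have fshift: "(fv A y P Us) $ i = (fv A y P X) $ i + (A P *v (X - Us)) $ i" for P X i
    by (simp add: algebra_simps)
  have Abd: "\<bar>(A P *v (X - Us)) $ i\<bar> \<le> BA0 * (\<Sum>j\<in>UNIV. \<bar>X $ j - Us $ j\<bar>)" if "P \<in> ?PS" for P X i
    using mv_bound[of "A P" i BA0 "X - Us"] bA[OF that] by simp
  have H'0: "Hop A y ?PS' Us = 0"
  proof -
    have ge: "Hop A y ?PS' Us $ i \<ge> 0" for i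
    proof -
      have "\<forall>l\<ge>1. - BA0 * r l \<le> Hop A y ?PS' Us $ i"
      proof (intro allI impI)
        fix l :: nat assume l1: "l \<ge> 1"
        have "(fv A y (Pol l) Us) $ i = (A (Pol l) *v (U l - Us)) $ i"
          using fshift[of "Pol l" i "U l"] solve[OF l1] by simp
        also have "\<dots> \<ge> - BA0 * r l" using Abd[OF PolS[OF l1], of "U l" i] by (simp add: r_def)
        finally have "- BA0 * r l \<le> (fv A y (Pol l) Us) $ i" .
        also have "\<dots> \<le> Hop A y ?PS' Us $ i"
          by (rule Hup[where A=A and y=y and Q="?PS'" and BA=BA0 and By=By, OF bA' bY' pol_in[OF l1]])
        finally show "- BA0 * r l \<le> Hop A y ?PS' Us $ i" .
      qed
      moreover have "(\<lambda>l. - BA0 * r l) \<longlonglongrightarrow> - BA0 * 0" by (intro tendsto_intros r0)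
      then have lim: "(\<lambda>l. - BA0 * r l) \<longlonglongrightarrow> 0" by simp
      ultimately show ?thesis using LIMSEQ_le_const2[OF lim, of "Hop A y ?PS' Us $ i"] by blast
    qed
    have le: "Hop A y ?PS' Us $ i \<le> 0" for i
    proof (rule Hleast[where A=A and y=y and Q="?PS'" and BA=BA0 and By=By, OF bA' bY' neP])
      fix P assume P: "P \<in> ?PS'"
      define g where "g m = BA0 * (r (Suc m) + r m) + eps (Suc m) + BA0 * r m" for m
      have "(fv A y P Us) $ i \<le> g m" for m
      proof -
        have s1: "Suc m \<ge> 1" by simp
        let ?B = "A (Pol (Suc m))"
        have a1: "(fv A y P Us) $ i \<le> (fv A y P (U m)) $ i + BA0 * r m"
          using fshift[of P i "U m"] Abd[of P "U m" i] P subPS by (auto simp: r_def)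
        have a2: "(fv A y P (U m)) $ i \<le> Hop A y ?PS' (U m) $ i"
          by (rule Hup[where A=A and y=y and Q="?PS'" and BA=BA0 and By=By, OF bA' bY' P])
        have a3: "Hop A y ?PS' (U m) $ i \<le> (- (?B *v U m) + y (Pol (Suc m))) $ i + eps (Suc m)"
          using pol_eps[OF s1] by (simp add: less_eq_vec_def ones_def)
        have a4: "(- (?B *v U m) + y (Pol (Suc m))) $ i = (?B *v (U (Suc m) - U m)) $ i"
          using solve[OF s1] by (simp add: algebra_simps)
        have a5: "\<bar>(?B *v (U (Suc m) - U m)) $ i\<bar> \<le> BA0 * (\<Sum>j\<in>UNIV. \<bar>(U (Suc m) - U m) $ j\<bar>)"
          by (rule mv_bound) (rule bA[OF PolS[OF s1]])
        have "(\<Sum>j\<in>UNIV. \<bar>(U (Suc m) - U m) $ j\<bar>) \<le> (\<Sum>j\<in>UNIV. \<bar>U (Suc m) $ j - Us $ j\<bar> + \<bar>U m $ j - Us $ j\<bar>)"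
          by (rule sum_mono) simp
        also have "\<dots> = r (Suc m) + r m" by (simp add: r_def sum.distrib)
        finally have a6: "BA0 * (\<Sum>j\<in>UNIV. \<bar>(U (Suc m) - U m) $ j\<bar>) \<le> BA0 * (r (Suc m) + r m)"
          using bA[OF PolS[OF s1], of i i] by (intro mult_left_mono) auto
        show ?thesis using a1 a2 a3 a4 a5 a6 unfolding g_def by linarith
      qed
      moreover have "g \<longlonglongrightarrow> BA0 * (0 + 0) + 0 + BA0 * 0"
        unfolding g_def
        by (intro tendsto_intros r0 LIMSEQ_Suc[OF r0] summable_LIMSEQ_zero[OF eps_sum])
      ultimately have bnd: "\<And>m. (fv A y P Us) $ i \<le> g m" and lim: "g \<longlonglongrightarrow> 0" by simp_all
      show "(fv A y P Us) $ i \<le> 0" using LIMSEQ_le_const[OF lim, of "(fv A y P Us) $ i"] bnd by blast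
    qed
    show ?thesis using ge le by (simp add: vec_eq_iff antisym)
  qed
  have HU: "Hop A y ?PS Us \<le> 0" using compat[OF H'0] .
  have HUe: "Hop A y ?PS Us = 0"
  proof -
    have "Hop A y ?PS' Us $ i \<le> Hop A y ?PS Us $ i" for i
    proof (rule Hleast[where A=A and y=y and Q="?PS'" and BA=BA0 and By=By, OF bA' bY' neP])
      fix P assume "P \<in> ?PS'"
      then have "P \<in> ?PS" using subPS by blast
      note hh = Hup[where A=A and y=y and Q="?PS" and BA=BA0 and By=By, OF bA bY this]
      then show "(fv A y P Us) $ i \<le> Hop A y ?PS Us $ i" by blast
    qed
    then show ?thesis using HU H'0 by (simp add: vec_eq_iff less_eq_vec_def) (meson antisym)
  qed
  have uniq: "W = Us" if HW: "Hop A y ?PS W = 0" for W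
  proof -
    have "Us $ i \<le> W $ i" for i
    proof -
      have "\<forall>l\<ge>1. U l $ i \<le> W $ i"
      proof (intro allI impI)
        fix l :: nat assume l1: "l \<ge> 1"
        have "(A (Pol l) *v (W - U l)) $ k \<ge> 0" for k
        proof -
          have "(fv A y (Pol l) W) $ k \<le> Hop A y ?PS W $ k"
            by (rule Hup[where A=A and y=y and Q="?PS" and BA=BA0 and By=By, OF bA bY PolS[OF l1]])
          then show ?thesis using HW solve[OF l1] by (simp add: algebra_simps)
        qed
        then have "(W - U l) $ i \<ge> 0" by (rule mono'[OF pol_in[OF l1]])
        then show "U l $ i \<le> W $ i" by simp
      qed
      then show ?thesis using LIMSEQ_le_const2[OF Uc] by blast
    qed
    moreover have "W $ i \<le> Us $ i" for i
      by (rule uniq_le[OF decoupled neS bA bY gd H4 K HW HU])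
    ultimately show ?thesis by (simp add: vec_eq_iff antisym)
  qed
  show ?thesis using HUe uniq Ulim by blast
qed

end
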